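(* $\mathfrak{ss}_{cc}\leq\mathfrak d$ and $\mathfrak b\leq\mathfrak{ss}_{cc}^\perp$.
   Context: Let $\mathfrak S$ be the set of all sequences $\mathbf a=\langle a_i:i\in\omega\rangle$ of rational numbers with $a_i\to 0$. Let $[\omega]^\omega_\omega$ denote the set of infinite coinfinite subsets of $\omega$. For infinite $X\subseteq\omega$ with increasing enumeration $\langle i_n\rangle$ write $\sum_X\mathbf a$ for $\sum_n a_{i_n}$. A series is convergent if its partial sums converge to a real number; it is conditional if $\sum_{\{i:a_i>0\}}\mathbf a=\infty$ and $\sum_{\{i:a_i<0\}}\mathbf a=-\infty$; conditionally convergent if both. Let $\mathfrak S_{cc}$ be the set of $\mathbf a\in\mathfrak S$ with $\sum\mathbf a$ conditionally convergent. $\mathfrak{ss}_{cc}$ is the least cardinality of a family $\mathcal X\subseteq[\omega]^\omega_\omega$ such that for every $\mathbf a\in\mathfrak S_{cc}$ there is $X\in\mathcal X$ with $\sum_X\mathbf a$ conditionally convergent; $\mathfrak{ss}_{cc}^\perp$ is the least cardinality of a family $\mathcal A\subseteq\mathfrak S_{cc}$ such that no $X\in[\omega]^\omega_\omega$ makes $\sum_X\mathbf a$ conditionally convergent for all $\mathbf a\in\mathcal A$. $\mathfrak b$ and $\mathfrak d$ are the bounding and dominating numbers. *)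

theory Defs
  imports "HOL-Analysis.Analysis" "HOL-Library.Infinite_Set"
begin

definition null_seq :: "(nat \<Rightarrow> rat) \<Rightarrow> bool" where
  "null_seq a \<longleftrightarrow> (\<lambda>i. real_of_rat (a i)) \<longlonglongrightarrow> 0"

definition inf_coinf :: "nat set \<Rightarrow> bool" where
  "inf_coinf X \<longleftrightarrow> infinite X \<and> infinite (- X)"

definition sub_psum :: "(nat \<Rightarrow> rat) \<Rightarrow> nat set \<Rightarrow> nat \<Rightarrow> real" where
  "sub_psum a X n = (\<Sum>k<n. real_of_rat (a (enumerate X k)))"

definition sub_convergent :: "(nat \<Rightarrow> rat) \<Rightarrow> nat set \<Rightarrow> bool" where
  "sub_convergent a X \<longleftrightarrow> infinite X \<and> convergent (sub_psum a X)"

definition sub_sum_pinf :: "(nat \<Rightarrow> rat) \<Rightarrow> nat set \<Rightarrow> bool" where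
  "sub_sum_pinf a Y \<longleftrightarrow> infinite Y \<and> filterlim (sub_psum a Y) at_top sequentially"

definition sub_sum_minf :: "(nat \<Rightarrow> rat) \<Rightarrow> nat set \<Rightarrow> bool" where
  "sub_sum_minf a Y \<longleftrightarrow> infinite Y \<and> filterlim (sub_psum a Y) at_bot sequentially"

definition sub_conditional :: "(nat \<Rightarrow> rat) \<Rightarrow> nat set \<Rightarrow> bool" where
  "sub_conditional a X \<longleftrightarrow>
     sub_sum_pinf a {i \<in> X. a i > 0} \<and> sub_sum_minf a {i \<in> X. a i < 0}"

definition sub_cc :: "(nat \<Rightarrow> rat) \<Rightarrow> nat set \<Rightarrow> bool" where
  "sub_cc a X \<longleftrightarrow> sub_convergent a X \<and> sub_conditional a X"

definition S_cc :: "(nat \<Rightarrow> rat) set" where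
  "S_cc = {a. null_seq a \<and> sub_cc a UNIV}"

definition ss_cc_family :: "nat set set \<Rightarrow> bool" where
  "ss_cc_family \<X> \<longleftrightarrow> \<X> \<subseteq> Collect inf_coinf \<and> (\<forall>a\<in>S_cc. \<exists>X\<in>\<X>. sub_cc a X)"

definition ss_cc_perp_family :: "(nat \<Rightarrow> rat) set \<Rightarrow> bool" where
  "ss_cc_perp_family \<A> \<longleftrightarrow> \<A> \<subseteq> S_cc \<and> \<not> (\<exists>X. inf_coinf X \<and> (\<forall>a\<in>\<A>. sub_cc a X))"

definition le_star :: "(nat \<Rightarrow> nat) \<Rightarrow> (nat \<Rightarrow> nat) \<Rightarrow> bool" where
  "le_star f g \<longleftrightarrow> (\<forall>\<^sub>F n in sequentially. f n \<le> g n)"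

definition dominating :: "(nat \<Rightarrow> nat) set \<Rightarrow> bool" where
  "dominating D \<longleftrightarrow> (\<forall>f. \<exists>g\<in>D. le_star f g)"

definition unbounded :: "(nat \<Rightarrow> nat) set \<Rightarrow> bool" where
  "unbounded B \<longleftrightarrow> (\<forall>g. \<exists>f\<in>B. \<not> le_star f g)"

(* "min{|x| : P x} <= min{|y| : Q y}" for cardinal characteristics given as least
   cardinalities of witnessing families: every Q-family y has a P-family x
   with |x| <=o |y| (this also asserts that the left minimum exists when the right one does). *)
definition min_card_le :: "('a set \<Rightarrow> bool) \<Rightarrow> ('b set \<Rightarrow> bool) \<Rightarrow> bool" where
  "min_card_le P Q \<longleftrightarrow> (\<forall>y. Q y \<longrightarrow> (\<exists>x. P x \<and> ordLeq3 (card_of x) (card_of y)))"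

end

theory Submission
  imports Defs
begin

definition PS :: "(nat \<Rightarrow> real) \<Rightarrow> nat set \<Rightarrow> nat \<Rightarrow> real" where
  "PS u S m = (\<Sum>i\<in>S \<inter> {..<m}. u i)"

lemma inter_enum:
  assumes "infinite (S::nat set)"
  shows "S \<inter> {..<enumerate S n} = enumerate S ` {..<n}"
proof
  show "S \<inter> {..<enumerate S n} \<subseteq> enumerate S ` {..<n}"
  proof
    fix s assume s: "s \<in> S \<inter> {..<enumerate S n}"
    then obtain k where k: "enumerate S k = s" using enumerate_Ex[OF assms] by blast
    then have "k < n" using s assms by auto
    then show "s \<in> enumerate S ` {..<n}" using k by auto
  qed
qed (use assms enumerate_in_set in auto)

lemma psum_enum:
  assumes "infinite S"
  shows "(\<Sum>k<n. u (enumerate S k)) = PS u S (enumerate S n)"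
  unfolding PS_def inter_enum[OF assms]
  by (subst sum.reindex) (use inj_enumerate[OF assms] inj_on_subset in auto)

lemma enum_UNIV: "enumerate (UNIV::nat set) n = n"
proof (induction n)
  case 0
  then show ?case by (simp add: enumerate_0)
next
  case (Suc n)
  then show ?case by (simp add: enumerate_Suc'') (rule Least_equality, auto)
qed

lemma PS_split:
  "PS u S m = PS u (S - Y) m + PS u (S \<inter> Y) m"
proof -
  have e: "S \<inter> {..<m} = ((S - Y) \<inter> {..<m}) \<union> ((S \<inter> Y) \<inter> {..<m})" by auto
  have "sum u (((S - Y) \<inter> {..<m}) \<union> ((S \<inter> Y) \<inter> {..<m})) = sum u ((S - Y) \<inter> {..<m}) + sum u ((S \<inter> Y) \<inter> {..<m})"
    by (rule sum.union_disjoint) auto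
  then show ?thesis unfolding PS_def e .
qed

lemma PS_restrict: "PS u S m = (\<Sum>i<m. if i \<in> S then u i else 0)"
  unfolding PS_def by (subst Int_commute) (simp add: sum.inter_restrict)

lemma PS_bound:
  assumes "summable (\<lambda>i. if i \<in> Y then \<bar>u i\<bar> else 0)"
  shows "\<bar>PS u (S \<inter> Y) m\<bar> \<le> (\<Sum>i. if i \<in> Y then \<bar>u i\<bar> else 0)"
proof -
  have "\<bar>PS u (S \<inter> Y) m\<bar> \<le> (\<Sum>i<m. \<bar>if i \<in> S \<inter> Y then u i else 0\<bar>)"
    unfolding PS_restrict by (rule sum_abs)
  also have "\<dots> \<le> (\<Sum>i<m. if i \<in> Y then \<bar>u i\<bar> else 0)"
    by (rule sum_mono) auto
  also have "\<dots> \<le> (\<Sum>i. if i \<in> Y then \<bar>u i\<bar> else 0)"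
    by (rule sum_le_suminf[OF assms]) auto
  finally show ?thesis .
qed


lemma PS_mono:
  assumes "\<forall>i\<in>S. 0 \<le> u i" "m \<le> m'"
  shows "PS u S m \<le> PS u S m'"
  unfolding PS_def by (rule sum_mono2) (use assms in auto)

lemma div_lemma:
  fixes u :: "nat \<Rightarrow> real"
  assumes inf: "infinite S" and nn: "\<forall>i\<in>S. 0 \<le> u i"
    and lim: "filterlim (\<lambda>n. PS u S (enumerate S n)) at_top sequentially"
    and sY: "summable (\<lambda>i. if i \<in> Y then \<bar>u i\<bar> else 0)"
  shows "infinite (S - Y) \<and> filterlim (\<lambda>n. PS u (S - Y) (enumerate (S - Y) n)) at_top sequentially"
proof -
  define B where "B = (\<Sum>i. if i \<in> Y then \<bar>u i\<bar> else 0)"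
  have full: "filterlim (PS u S) at_top sequentially"
    unfolding filterlim_at_top eventually_sequentially
  proof
    fix Z
    from lim obtain N where N: "\<forall>n\<ge>N. Z \<le> PS u S (enumerate S n)"
      unfolding filterlim_at_top eventually_sequentially by blast
    have "\<forall>m\<ge>enumerate S N. Z \<le> PS u S m"
      using N PS_mono[OF nn] order_trans by blast
    then show "\<exists>N. \<forall>n\<ge>N. Z \<le> PS u S n" by blast
  qed
  have red: "filterlim (PS u (S - Y)) at_top sequentially"
    unfolding filterlim_at_top eventually_sequentially
  proof
    fix Z
    from full obtain N where N: "\<forall>n\<ge>N. Z + B \<le> PS u S n"
      unfolding filterlim_at_top eventually_sequentially by blast
    have "\<forall>m\<ge>N. Z \<le> PS u (S - Y) m"
    proof (intro allI impI)
      fix m assume "N \<le> m"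
      then have "Z + B \<le> PS u S m" using N by blast
      moreover have "PS u S m = PS u (S - Y) m + PS u (S \<inter> Y) m" by (rule PS_split)
      moreover have "\<bar>PS u (S \<inter> Y) m\<bar> \<le> B" unfolding B_def by (rule PS_bound[OF sY])
      ultimately show "Z \<le> PS u (S - Y) m" by linarith
    qed
    then show "\<exists>N. \<forall>n\<ge>N. Z \<le> PS u (S - Y) n" by blast
  qed
  have infSY: "infinite (S - Y)"
  proof
    assume fin: "finite (S - Y)"
    define C where "C = sum u (S - Y)"
    have "\<And>m. PS u (S - Y) m \<le> C"
      unfolding PS_def C_def by (rule sum_mono2) (use fin nn in auto)
    moreover from red obtain N where "\<forall>n\<ge>N. C + 1 \<le> PS u (S - Y) n"
      unfolding filterlim_at_top eventually_sequentially by blast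
    ultimately show False by (metis add_le_same_cancel1 le_refl not_one_le_zero order_trans)
  qed
  have "filterlim (\<lambda>n. PS u (S - Y) (enumerate (S - Y) n)) at_top sequentially"
    using filterlim_compose[OF red filterlim_subseq[OF strict_mono_enumerate[OF infSY]]] by simp
  with infSY show ?thesis by blast
qed

lemma conv_lemma:
  fixes u :: "nat \<Rightarrow> real"
  assumes conv: "convergent (\<lambda>n. \<Sum>i<n. u i)"
    and sY: "summable (\<lambda>i. if i \<in> Y then \<bar>u i\<bar> else 0)"
    and inf: "infinite (- Y)"
  shows "convergent (\<lambda>n. PS u (- Y) (enumerate (- Y) n))"
proof -
  have s2: "summable (\<lambda>i. if i \<in> Y then u i else 0)"
  proof (rule summable_rabs_cancel)
    have "(\<lambda>i. \<bar>if i \<in> Y then u i else 0\<bar>) = (\<lambda>i. if i \<in> Y then \<bar>u i\<bar> else 0)" by auto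
    then show "summable (\<lambda>i. \<bar>if i \<in> Y then u i else 0\<bar>)" using sY by simp
  qed
  have l2: "(\<lambda>m. PS u (UNIV \<inter> Y) m) \<longlonglongrightarrow> (\<Sum>i. if i \<in> Y then u i else 0)"
    unfolding PS_restrict using summable_LIMSEQ[OF s2] by simp
  obtain L where l1: "(\<lambda>n. \<Sum>i<n. u i) \<longlonglongrightarrow> L" using conv convergent_def by blast
  have l1': "(\<lambda>m. PS u UNIV m) \<longlonglongrightarrow> L" unfolding PS_def using l1 by simp
  have "(\<lambda>m. PS u UNIV m - PS u (UNIV \<inter> Y) m) \<longlonglongrightarrow> L - (\<Sum>i. if i \<in> Y then u i else 0)"
    by (rule tendsto_diff[OF l1' l2])
  moreover have "\<And>m. PS u UNIV m - PS u (UNIV \<inter> Y) m = PS u (- Y) m"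
    using PS_split[of u UNIV _ Y] by (simp add: Compl_eq_Diff_UNIV)
  ultimately have "(\<lambda>m. PS u (- Y) m) \<longlonglongrightarrow> L - (\<Sum>i. if i \<in> Y then u i else 0)" by simp
  from LIMSEQ_subseq_LIMSEQ[OF this strict_mono_enumerate[OF inf]]
  show ?thesis unfolding convergent_def o_def by blast
qed


lemma sub_psum_PS: "infinite S \<Longrightarrow> sub_psum a S n = PS (\<lambda>i. real_of_rat (a i)) S (enumerate S n)"
  unfolding sub_psum_def by (rule psum_enum)

lemma sub_psum_PS': "infinite S \<Longrightarrow> sub_psum a S = (\<lambda>n. PS (\<lambda>i. real_of_rat (a i)) S (enumerate S n))"
  using sub_psum_PS by blast

lemma PS_neg: "PS (\<lambda>i. - u i) S m = - PS u S m"
  unfolding PS_def by (simp add: sum_negf)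

lemma key:
  assumes a: "a \<in> S_cc" and iY: "infinite Y" and icY: "infinite (- Y)"
    and sY: "summable (\<lambda>i. if i \<in> Y then \<bar>real_of_rat (a i)\<bar> else 0)"
  shows "sub_cc a (- Y)"
proof -
  define u where "u = (\<lambda>i. real_of_rat (a i))"
  have ccU: "sub_cc a UNIV" using a unfolding S_cc_def by blast
  have convU: "convergent (\<lambda>n. \<Sum>i<n. u i)"
    using ccU unfolding sub_cc_def sub_convergent_def sub_psum_def u_def by (simp add: enum_UNIV)
  have sY': "summable (\<lambda>i. if i \<in> Y then \<bar>u i\<bar> else 0)" using sY unfolding u_def .
  have conv: "sub_convergent a (- Y)"
    unfolding sub_convergent_def
  proof
    have "sub_psum a (- Y) = (\<lambda>n. PS u (- Y) (enumerate (- Y) n))"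
      using sub_psum_PS[OF icY, of a] unfolding u_def by auto
    then show "convergent (sub_psum a (- Y))" using conv_lemma[OF convU sY' icY] by simp
  qed (rule icY)
  define P where "P = {i. 0 < a i}"
  have pinfU: "sub_sum_pinf a P" using ccU unfolding sub_cc_def sub_conditional_def P_def by simp
  then have iP: "infinite P" and lP: "filterlim (\<lambda>n. PS u P (enumerate P n)) at_top sequentially"
    unfolding sub_sum_pinf_def u_def by (auto simp: sub_psum_PS')
  have nnP: "\<forall>i\<in>P. 0 \<le> u i" unfolding P_def u_def by auto
  from div_lemma[OF iP nnP lP sY']
  have "infinite (P - Y) \<and> filterlim (\<lambda>n. PS u (P - Y) (enumerate (P - Y) n)) at_top sequentially" .
  moreover have "{i \<in> - Y. 0 < a i} = P - Y" unfolding P_def by auto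
  ultimately have pinf: "sub_sum_pinf a {i \<in> - Y. 0 < a i}"
    unfolding sub_sum_pinf_def u_def by (auto simp: sub_psum_PS')
  define N where "N = {i. a i < 0}"
  have minfU: "sub_sum_minf a N" using ccU unfolding sub_cc_def sub_conditional_def N_def by simp
  then have iN: "infinite N" and lN0: "filterlim (\<lambda>n. PS u N (enumerate N n)) at_bot sequentially"
    unfolding sub_sum_minf_def u_def by (auto simp: sub_psum_PS')
  have lN: "filterlim (\<lambda>n. PS (\<lambda>i. - u i) N (enumerate N n)) at_top sequentially"
    unfolding PS_neg using filterlim_uminus_at_top[of "\<lambda>n. - PS u N (enumerate N n)" sequentially] lN0 by simp
  have nnN: "\<forall>i\<in>N. 0 \<le> - u i" unfolding N_def u_def by auto
  have sY'': "summable (\<lambda>i. if i \<in> Y then \<bar>- u i\<bar> else 0)" using sY' by (simp only: abs_minus_cancel)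
  from div_lemma[OF iN nnN lN sY'']
  have "infinite (N - Y) \<and> filterlim (\<lambda>n. PS (\<lambda>i. - u i) (N - Y) (enumerate (N - Y) n)) at_top sequentially" .
  then have "infinite (N - Y) \<and> filterlim (\<lambda>n. PS u (N - Y) (enumerate (N - Y) n)) at_bot sequentially"
    unfolding PS_neg using filterlim_uminus_at_top[of "\<lambda>n. - PS u (N - Y) (enumerate (N - Y) n)" sequentially] by simp
  moreover have "{i \<in> - Y. a i < 0} = N - Y" unfolding N_def by auto
  ultimately have minf: "sub_sum_minf a {i \<in> - Y. a i < 0}"
    unfolding sub_sum_minf_def u_def by (auto simp: sub_psum_PS')
  show ?thesis unfolding sub_cc_def sub_conditional_def using conv pinf minf by blast
qed

definition fa :: "(nat \<Rightarrow> rat) \<Rightarrow> nat \<Rightarrow> nat" where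
  "fa a n = (LEAST m. \<forall>i\<ge>m. \<bar>real_of_rat (a i)\<bar> < (1/2)^n)"

lemma fa_prop:
  assumes "null_seq a" "fa a n \<le> i"
  shows "\<bar>real_of_rat (a i)\<bar> < (1/2)^n"
proof -
  have "\<exists>m. \<forall>i\<ge>m. \<bar>real_of_rat (a i)\<bar> < (1/2)^n"
    using assms(1) unfolding null_seq_def LIMSEQ_iff by simp
  from LeastI_ex[OF this] assms(2) show ?thesis unfolding fa_def by blast
qed

definition yg :: "(nat \<Rightarrow> nat) \<Rightarrow> nat \<Rightarrow> nat" where
  "yg g n = 2 * (n + (\<Sum>k\<le>n. g k))"

definition Xg :: "(nat \<Rightarrow> nat) \<Rightarrow> nat set" where
  "Xg g = - range (yg g)"

lemma yg_mono: "strict_mono (yg g)"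
  unfolding strict_mono_Suc_iff yg_def by simp

lemma yg_ge: "g n \<le> yg g n"
proof -
  have "g n \<le> (\<Sum>k\<le>n. g k)" by (rule member_le_sum) auto
  then show ?thesis unfolding yg_def by simp
qed

lemma yg_inf: "infinite (range (yg g))"
  using range_inj_infinite strict_mono_imp_inj_on[OF yg_mono] by blast

lemma yg_coinf: "infinite (- range (yg g))"
  unfolding infinite_nat_iff_unbounded
proof
  fix m
  have "2 * m + 1 \<notin> range (yg g)" unfolding yg_def by auto presburger
  then show "\<exists>n>m. n \<in> - range (yg g)" by (intro exI[of _ "2*m+1"]) auto
qed

lemma yg_sum:
  assumes "null_seq a" "le_star (fa a) g"
  shows "summable (\<lambda>i. if i \<in> range (yg g) then \<bar>real_of_rat (a i)\<bar> else 0)"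
proof -
  define F where "F = (\<lambda>i. if i \<in> range (yg g) then \<bar>real_of_rat (a i)\<bar> else 0)"
  have ev: "\<forall>\<^sub>F n in sequentially. norm (\<bar>real_of_rat (a (yg g n))\<bar>) \<le> (1/2)^n"
    using assms(2) unfolding le_star_def
  proof (rule eventually_mono)
    fix n assume "fa a n \<le> g n"
    then have "fa a n \<le> yg g n" using yg_ge[of g n] by linarith
    then show "norm (\<bar>real_of_rat (a (yg g n))\<bar>) \<le> (1/2)^n" using fa_prop[OF assms(1)] by fastforce
  qed
  have "summable (\<lambda>n. \<bar>real_of_rat (a (yg g n))\<bar>)"
    by (rule summable_comparison_test_ev[OF ev]) (rule summable_geometric, simp)
  moreover have "(\<lambda>n. F (yg g n)) = (\<lambda>n. \<bar>real_of_rat (a (yg g n))\<bar>)" unfolding F_def by auto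
  ultimately have "summable (\<lambda>n. F (yg g n))" by simp
  moreover have "\<And>c. (\<lambda>n. F (yg g n)) sums c \<longleftrightarrow> F sums c"
    by (rule sums_mono_reindex[OF yg_mono]) (auto simp: F_def)
  ultimately have "summable F"
    unfolding summable_def by auto
  then show ?thesis unfolding F_def .
qed

lemma Xg_good:
  assumes "a \<in> S_cc" "le_star (fa a) g"
  shows "sub_cc a (Xg g)"
  unfolding Xg_def
  by (rule key[OF assms(1) yg_inf yg_coinf yg_sum]) (use assms S_cc_def in auto)

lemma Xg_ic: "inf_coinf (Xg g)"
  unfolding inf_coinf_def Xg_def using yg_inf yg_coinf by simp

theorem mainTheorem5:
  shows "min_card_le ss_cc_family dominating \<and> min_card_le unbounded ss_cc_perp_family"
proof
  show "min_card_le ss_cc_family dominating"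
    unfolding min_card_le_def
  proof (intro allI impI)
    fix D assume D: "dominating D"
    have "ss_cc_family (Xg ` D)"
      unfolding ss_cc_family_def
    proof
      show "Xg ` D \<subseteq> Collect inf_coinf" using Xg_ic by auto
      show "\<forall>a\<in>S_cc. \<exists>X\<in>Xg ` D. sub_cc a X"
      proof
        fix a assume a: "a \<in> S_cc"
        then obtain g where "g \<in> D" "le_star (fa a) g" using D unfolding dominating_def by blast
        then show "\<exists>X\<in>Xg ` D. sub_cc a X" using Xg_good[OF a] by blast
      qed
    qed
    then show "\<exists>x. ss_cc_family x \<and> ordLeq3 (card_of x) (card_of D)" using card_of_image by blast
  qed
  show "min_card_le unbounded ss_cc_perp_family"
    unfolding min_card_le_def
  proof (intro allI impI)
    fix A assume A: "ss_cc_perp_family A"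
    have "unbounded (fa ` A)"
      unfolding unbounded_def
    proof
      fix g
      show "\<exists>f\<in>fa ` A. \<not> le_star f g"
      proof (rule ccontr)
        assume "\<not> ?thesis"
        then have "\<forall>a\<in>A. le_star (fa a) g" by auto
        then have "\<forall>a\<in>A. sub_cc a (Xg g)" using Xg_good A unfolding ss_cc_perp_family_def by blast
        then show False using A Xg_ic unfolding ss_cc_perp_family_def by blast
      qed
    qed
    then show "\<exists>x. unbounded x \<and> ordLeq3 (card_of x) (card_of A)" using card_of_image by blast
  qed
qed

end
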